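(* Let $n\ge2$ and let $D_n$ be the group of even signed permutations of $\{\pm1,\ldots,\pm n\}$. For $\pi\in D_n$ set $\pi(0)=-\pi(2)$, $\mathrm{des}(\pi)=\#\{0\le i<n : \pi(i)>\pi(i+1)\}$ and $\mathrm{ides}(\pi)=\mathrm{des}(\pi^{-1})$. For $\pi$ uniformly random in $D_n$ let $X_{\mathrm{des}}=\mathrm{des}(\pi)$ and $X_{\mathrm{des}+\mathrm{ides}}=\mathrm{des}(\pi)+\mathrm{ides}(\pi)$. Then \[ \mathbb{E}(X_{\mathrm{des}+\mathrm{ides}})=n,\qquad \mathbb{V}(X_{\mathrm{des}+\mathrm{ides}}) = 2\,\mathbb{V}(X_{\mathrm{des}}) + \frac{n}{2n-2}. \]
   Context: A signed permutation is a bijection $\pi$ of $\{\pm1,\ldots,\pm n\}$ with $\pi(-i)=-\pi(i)$, written $[\pi(1),\ldots,\pi(n)]$; it is even if an even number of $\pi(1),\ldots,\pi(n)$ are negative. The convention $\pi(0)=-\pi(2)$ is applied to both $\pi$ and $\pi^{-1}$. *)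

theory Defs
  imports "HOL-Combinatorics.Permutations" Complex_Main
begin

definition signed_perms :: "nat \<Rightarrow> (int \<Rightarrow> int) set" where
  "signed_perms n = {\<pi>. \<pi> permutes ({-int n..int n} - {0}) \<and> (\<forall>i. \<pi> (-i) = - \<pi> i)}"

definition even_signed_perms :: "nat \<Rightarrow> (int \<Rightarrow> int) set" where
  "even_signed_perms n = {\<pi> \<in> signed_perms n. even (card {i \<in> {1..int n}. \<pi> i < 0})}"

definition Dval :: "(int \<Rightarrow> int) \<Rightarrow> int \<Rightarrow> int" where
  "Dval \<pi> i = (if i = 0 then - \<pi> 2 else \<pi> i)"

definition desD :: "nat \<Rightarrow> (int \<Rightarrow> int) \<Rightarrow> nat" where
  "desD n \<pi> = card {i \<in> {0..<int n}. Dval \<pi> i > Dval \<pi> (i + 1)}"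

definition idesD :: "nat \<Rightarrow> (int \<Rightarrow> int) \<Rightarrow> nat" where
  "idesD n \<pi> = desD n (inv \<pi>)"

definition unif_expect :: "'a set \<Rightarrow> ('a \<Rightarrow> real) \<Rightarrow> real" where
  "unif_expect A X = (\<Sum>x\<in>A. X x) / real (card A)"

definition unif_var :: "'a set \<Rightarrow> ('a \<Rightarrow> real) \<Rightarrow> real" where
  "unif_var A X = unif_expect A (\<lambda>x. (X x - unif_expect A X)^2)"

end

theory Submission
  imports Defs
begin

definition VV :: "nat \<Rightarrow> int set" where "VV n = {-int n..int n} - {0}"
definition par :: "nat \<Rightarrow> (int \<Rightarrow> int) \<Rightarrow> int" where
  "par n p = (\<Prod>i\<in>{1..int n}. sgn (p i))"

lemma sp_perm: "p \<in> signed_perms n \<Longrightarrow> p permutes VV n"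
  by (simp add: signed_perms_def VV_def)

lemma sp_odd: "p \<in> signed_perms n \<Longrightarrow> p (-i) = - p i"
  by (simp add: signed_perms_def)

lemma sp_inj: "p \<in> signed_perms n \<Longrightarrow> p x = p y \<longleftrightarrow> x = y"
  using permutes_inj[OF sp_perm] by (metis injD)

lemma sp_zero: "p \<in> signed_perms n \<Longrightarrow> p 0 = 0"
  using sp_odd[of p n 0] by simp

lemma sp_nonzero: "p \<in> signed_perms n \<Longrightarrow> x \<noteq> 0 \<Longrightarrow> p x \<noteq> 0"
  using sp_zero sp_inj by metis

lemma sp_VV: "p \<in> signed_perms n \<Longrightarrow> x \<in> VV n \<Longrightarrow> p x \<in> VV n"
  using permutes_in_image[OF sp_perm] by blast

lemma sp_id: "id \<in> signed_perms n"
  by (simp add: signed_perms_def)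

lemma sp_comp: "p \<in> signed_perms n \<Longrightarrow> q \<in> signed_perms n \<Longrightarrow> p \<circ> q \<in> signed_perms n"
  unfolding signed_perms_def by (auto intro: permutes_compose)

lemma sp_inv: assumes "p \<in> signed_perms n" shows "inv p \<in> signed_perms n"
proof -
  have pp: "p permutes VV n" using sp_perm[OF assms] .
  have b: "bij p" using permutes_bij[OF pp] .
  have "inv p (-i) = - inv p i" for i
  proof -
    have "p (- inv p i) = - i" using sp_odd[OF assms, of "inv p i"] bij_inv_eq_iff[OF b] by (metis)
    thus ?thesis using bij_inv_eq_iff[OF b] by metis
  qed
  thus ?thesis using permutes_inv[OF pp] by (simp add: signed_perms_def VV_def)
qed

lemma inv_left: "p \<in> signed_perms n \<Longrightarrow> inv p (p x) = x"
  using permutes_inverses(2)[OF sp_perm] by blast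
lemma inv_right: "p \<in> signed_perms n \<Longrightarrow> p (inv p x) = x"
  using permutes_inverses(1)[OF sp_perm] by blast

lemma par_alt:
  assumes "p \<in> signed_perms n"
  shows "par n p = (-1) ^ card {i \<in> {1..int n}. p i < 0}"
proof -
  have "par n p = (\<Prod>i\<in>{1..int n}. (if p i < 0 then -1 else 1))"
    unfolding par_def
    by (rule prod.cong) (use sp_nonzero[OF assms] in \<open>auto simp: sgn_if\<close>)
  also have "\<dots> = (\<Prod>i\<in>{i \<in> {1..int n}. p i < 0}. -1)"
    by (subst prod.If_cases) (auto simp: Int_def)
  finally show ?thesis by simp
qed

lemma esp_iff: "p \<in> even_signed_perms n \<longleftrightarrow> p \<in> signed_perms n \<and> par n p = 1"
proof -
  have "p \<in> signed_perms n \<Longrightarrow> even (card {i \<in> {1..int n}. p i < 0}) \<longleftrightarrow> par n p = 1"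
    by (simp add: par_alt minus_one_power_iff)
  thus ?thesis unfolding even_signed_perms_def by blast
qed

lemma abs_bij:
  assumes q: "q \<in> signed_perms n"
  shows "bij_betw (\<lambda>i. \<bar>q i\<bar>) {1..int n} {1..int n}"
proof -
  let ?f = "\<lambda>i. \<bar>q i\<bar>"
  have sub: "?f ` {1..int n} \<subseteq> {1..int n}"
  proof
    fix y assume "y \<in> ?f ` {1..int n}"
    then obtain i where i: "i \<in> {1..int n}" "y = \<bar>q i\<bar>" by auto
    have "i \<in> VV n" using i by (auto simp: VV_def)
    hence "q i \<in> VV n" using sp_VV[OF q] by blast
    thus "y \<in> {1..int n}" using i by (auto simp: VV_def)
  qed
  have inj: "inj_on ?f {1..int n}"
  proof
    fix i j assume ij: "i \<in> {1..int n}" "j \<in> {1..int n}" "\<bar>q i\<bar> = \<bar>q j\<bar>"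
    hence "q i = q j \<or> q i = - q j" by arith
    hence "q i = q j \<or> q i = q (-j)" using sp_odd[OF q] by metis
    hence "i = j \<or> i = -j" using sp_inj[OF q] by blast
    thus "i = j" using ij by auto
  qed
  have "?f ` {1..int n} = {1..int n}" using endo_inj_surj[OF _ sub inj] by simp
  thus ?thesis using inj by (simp add: bij_betw_def)
qed

lemma par_comp:
  assumes p: "p \<in> signed_perms n" and q: "q \<in> signed_perms n"
  shows "par n (p \<circ> q) = par n p * par n q"
proof -
  have e: "sgn (p (q i)) = sgn (q i) * sgn (p \<bar>q i\<bar>)" for i
  proof (cases "q i < 0")
    case True
    hence "q i = - \<bar>q i\<bar>" by simp
    hence "p (q i) = - p \<bar>q i\<bar>" using sp_odd[OF p] by metis
    thus ?thesis using True by (simp add: sgn_minus)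
  next
    case False
    thus ?thesis by (cases "q i = 0") (auto simp: sp_zero[OF p])
  qed
  have "par n (p \<circ> q) = (\<Prod>i\<in>{1..int n}. sgn (q i) * sgn (p \<bar>q i\<bar>))"
    unfolding par_def using e by simp
  also have "\<dots> = par n q * (\<Prod>i\<in>{1..int n}. sgn (p \<bar>q i\<bar>))"
    by (simp add: prod.distrib par_def)
  also have "(\<Prod>i\<in>{1..int n}. sgn (p \<bar>q i\<bar>)) = par n p"
    unfolding par_def using prod.reindex_bij_betw[OF abs_bij[OF q], of "\<lambda>k. sgn (p k)"] by simp
  finally show ?thesis by (simp add: comp_def mult.commute)
qed

lemma par_pm1: "p \<in> signed_perms n \<Longrightarrow> par n p = 1 \<or> par n p = -1"
  by (simp add: par_alt minus_one_power_iff)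

lemma par_id: "par n id = 1"
  by (simp add: par_def)

lemma esp_sp: "p \<in> even_signed_perms n \<Longrightarrow> p \<in> signed_perms n"
  by (simp add: esp_iff)

lemma esp_comp: "p \<in> even_signed_perms n \<Longrightarrow> q \<in> even_signed_perms n \<Longrightarrow> p \<circ> q \<in> even_signed_perms n"
  by (simp add: esp_iff sp_comp par_comp)

lemma sp_inv_o: "p \<in> signed_perms n \<Longrightarrow> p \<circ> inv p = id"
  using inv_right by (auto simp: fun_eq_iff)

lemma esp_inv: assumes "p \<in> even_signed_perms n" shows "inv p \<in> even_signed_perms n"
proof -
  have p: "p \<in> signed_perms n" "par n p = 1" using assms by (auto simp: esp_iff)
  have "par n (p \<circ> inv p) = par n p * par n (inv p)" using par_comp[OF p(1) sp_inv[OF p(1)]] .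
  hence "par n (inv p) = 1" using p sp_inv_o[OF p(1)] par_id by simp
  thus ?thesis using sp_inv[OF p(1)] by (simp add: esp_iff)
qed

lemma esp_finite: "finite (even_signed_perms n)"
proof -
  have "even_signed_perms n \<subseteq> {p. p permutes VV n}" using esp_sp sp_perm by blast
  moreover have "finite {p. p permutes VV n}" by (rule finite_permutations) (simp add: VV_def)
  ultimately show ?thesis using finite_subset by blast
qed

lemma esp_id: "id \<in> even_signed_perms n"
  by (simp add: esp_iff sp_id par_id)


definition tau :: "int \<Rightarrow> int" where "tau i = (if i = 0 then -2 else i)"

definition rr :: "int \<Rightarrow> int \<Rightarrow> int" where
  "rr j z = (if z = tau j then j+1 else if z = j+1 then tau j
     else if z = - tau j then -(j+1) else if z = -(j+1) then - tau j else z)"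

definition bad :: "int \<Rightarrow> int \<Rightarrow> int \<Rightarrow> bool" where
  "bad j x y \<longleftrightarrow> ({x,y} = {tau j, j+1} \<or> {x,y} = {- tau j, -(j+1)})"

definition Xd :: "(int \<Rightarrow> int) \<Rightarrow> int \<Rightarrow> real" where
  "Xd p i = (if p (tau i) > p (i+1) then 1 else 0)"

lemma invol_permutes:
  assumes "\<And>x. f (f x) = x" "\<And>x. x \<notin> S \<Longrightarrow> f x = x"
  shows "f permutes S"
  unfolding permutes_def using assms by metis

lemma rr_invol: "j \<ge> 0 \<Longrightarrow> rr j (rr j z) = z"
  by (auto simp: rr_def tau_def)

lemma rr_tau: "j \<ge> 0 \<Longrightarrow> rr j (tau j) = j+1"
  by (auto simp: rr_def tau_def)
lemma rr_suc: "j \<ge> 0 \<Longrightarrow> rr j (j+1) = tau j"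
  by (auto simp: rr_def tau_def)

lemma rr_odd: "j \<ge> 0 \<Longrightarrow> rr j (-z) = - rr j z"
  by (auto simp: rr_def tau_def)

lemma rr_esp:
  assumes "n \<ge> 2" "j \<in> {0..<int n}"
  shows "rr j \<in> even_signed_perms n"
proof -
  have "rr j permutes VV n"
    by (rule invol_permutes) (use assms in \<open>auto simp: rr_invol rr_def tau_def VV_def\<close>)
  hence sp: "rr j \<in> signed_perms n" using rr_odd assms by (auto simp: signed_perms_def VV_def)
  have "{i \<in> {1..int n}. rr j i < 0} = (if j = 0 then {1,2} else {})"
    using assms by (auto simp: rr_def tau_def)
  thus ?thesis using sp by (simp add: even_signed_perms_def)
qed

lemma rrj: "j > 0 \<Longrightarrow> rr j z = (if z = j then j+1 else if z = j+1 then j else if z = -j then -j-1 else if z = -j-1 then -j else z)"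
  by (auto simp: rr_def tau_def)
lemma badj: "j > 0 \<Longrightarrow> bad j x y \<longleftrightarrow> (x = j \<and> y = j+1) \<or> (x = j+1 \<and> y = j) \<or> (x = -j \<and> y = -j-1) \<or> (x = -j-1 \<and> y = -j)"
  by (auto simp: bad_def tau_def doubleton_eq_iff)
lemma rr_order_pos:
  assumes j: "j > 0" and "x \<noteq> y" "x \<noteq> -y" "\<not> bad j x y"
  shows "rr j x > rr j y \<longleftrightarrow> x > y"
proof -
  have nb: "\<not> ((x = j \<and> y = j+1) \<or> (x = j+1 \<and> y = j) \<or> (x = -j \<and> y = -j-1) \<or> (x = -j-1 \<and> y = -j))"
    using assms badj[OF j] by blast
  have cx: "x = j \<or> x = j+1 \<or> x = -j \<or> x = -j-1 \<or> (x \<noteq> j \<and> x \<noteq> j+1 \<and> x \<noteq> -j \<and> x \<noteq> -j-1)" by blast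
  have cy: "y = j \<or> y = j+1 \<or> y = -j \<or> y = -j-1 \<or> (y \<noteq> j \<and> y \<noteq> j+1 \<and> y \<noteq> -j \<and> y \<noteq> -j-1)" by blast
  show ?thesis using cx cy nb assms(2,3) j unfolding rrj[OF j]
    apply (elim disjE conjE)
    apply simp_all
    apply (rule iffI; linarith)+
    done
qed
lemma bad_rr_pos: "j > 0 \<Longrightarrow> bad j (rr j x) (rr j y) \<longleftrightarrow> bad j x y"
proof -
  assume j: "j > 0"
  have cx: "x = j \<or> x = j+1 \<or> x = -j \<or> x = -j-1 \<or> (x \<noteq> j \<and> x \<noteq> j+1 \<and> x \<noteq> -j \<and> x \<noteq> -j-1)" by blast
  have cy: "y = j \<or> y = j+1 \<or> y = -j \<or> y = -j-1 \<or> (y \<noteq> j \<and> y \<noteq> j+1 \<and> y \<noteq> -j \<and> y \<noteq> -j-1)" by blast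
  show ?thesis using cx cy j unfolding rrj[OF j] badj[OF j]
    apply (elim disjE conjE)
    apply simp_all
    done
qed
lemma rr0: "rr 0 z = (if z = -2 then 1 else if z = 1 then -2 else if z = 2 then -1 else if z = -1 then 2 else z)"
  by (simp add: rr_def tau_def)
lemma bad0: "bad 0 x y \<longleftrightarrow> (x = -2 \<and> y = 1) \<or> (x = 1 \<and> y = -2) \<or> (x = 2 \<and> y = -1) \<or> (x = -1 \<and> y = 2)"
  by (auto simp: bad_def tau_def doubleton_eq_iff)
lemma rr_order0:
  assumes "x \<noteq> 0" "y \<noteq> 0" "x \<noteq> y" "x \<noteq> -y" "\<not> bad 0 x y"
  shows "rr 0 x > rr 0 y \<longleftrightarrow> x > y"
proof -
  have nb: "\<not> ((x = -2 \<and> y = 1) \<or> (x = 1 \<and> y = -2) \<or> (x = 2 \<and> y = -1) \<or> (x = -1 \<and> y = 2))"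
    using assms bad0 by blast
  have cx: "x = -2 \<or> x = 1 \<or> x = 2 \<or> x = -1 \<or> (x \<noteq> -2 \<and> x \<noteq> 1 \<and> x \<noteq> 2 \<and> x \<noteq> -1)" by blast
  have cy: "y = -2 \<or> y = 1 \<or> y = 2 \<or> y = -1 \<or> (y \<noteq> -2 \<and> y \<noteq> 1 \<and> y \<noteq> 2 \<and> y \<noteq> -1)" by blast
  show ?thesis using cx cy nb assms(1-4) unfolding rr0
    apply (elim disjE conjE)
    apply simp_all
    apply (rule iffI; linarith)+
    done
qed
lemma bad_rr0: "bad 0 (rr 0 x) (rr 0 y) \<longleftrightarrow> bad 0 x y"
proof -
  have cx: "x = -2 \<or> x = 1 \<or> x = 2 \<or> x = -1 \<or> (x \<noteq> -2 \<and> x \<noteq> 1 \<and> x \<noteq> 2 \<and> x \<noteq> -1)" by blast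
  have cy: "y = -2 \<or> y = 1 \<or> y = 2 \<or> y = -1 \<or> (y \<noteq> -2 \<and> y \<noteq> 1 \<and> y \<noteq> 2 \<and> y \<noteq> -1)" by blast
  show ?thesis using cx cy unfolding rr0 bad0
    apply (elim disjE conjE)
    apply simp_all
    done
qed

lemma rr_order:
  assumes "j \<ge> 0" "x \<noteq> 0" "y \<noteq> 0" "x \<noteq> y" "x \<noteq> -y" "\<not> bad j x y"
  shows "rr j x > rr j y \<longleftrightarrow> x > y"
proof (cases "j = 0")
  case True
  thus ?thesis using rr_order0 assms(2-6) by simp
next
  case False
  hence "j > 0" using assms(1) by simp
  thus ?thesis using rr_order_pos assms(4-6) by blast
qed

lemma bad_rr: "j \<ge> 0 \<Longrightarrow> bad j (rr j x) (rr j y) \<longleftrightarrow> bad j x y"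
  using bad_rr0 bad_rr_pos by (cases "j = 0") auto

lemma bad_sym: "bad j x y \<longleftrightarrow> bad j y x"
  by (auto simp: bad_def doubleton_eq_iff)

lemma Xd_right:
  assumes "p \<in> signed_perms n" "i \<ge> 0"
  shows "Xd (p \<circ> rr i) i = 1 - Xd p i"
proof -
  have "tau i \<noteq> i + 1" using assms by (auto simp: tau_def)
  hence "p (tau i) \<noteq> p (i+1)" using sp_inj[OF assms(1)] by blast
  thus ?thesis using assms by (auto simp: Xd_def rr_tau rr_suc)
qed

lemma pos_ok:
  assumes "p \<in> signed_perms n" "i \<ge> 0"
  shows "p (tau i) \<noteq> 0" "p (i+1) \<noteq> 0" "p (tau i) \<noteq> p (i+1)" "p (tau i) \<noteq> - p (i+1)"
proof -
  show "p (tau i) \<noteq> 0" "p (i+1) \<noteq> 0" using sp_nonzero[OF assms(1)] assms by (auto simp: tau_def)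
  have "tau i \<noteq> i + 1" "tau i \<noteq> -(i+1)" using assms by (auto simp: tau_def)
  thus "p (tau i) \<noteq> p (i+1)" "p (tau i) \<noteq> - p (i+1)"
    using sp_inj[OF assms(1)] sp_odd[OF assms(1)] by metis+
qed

lemma Xd_left:
  assumes "p \<in> signed_perms n" "i \<ge> 0" "j \<ge> 0" "\<not> bad j (p (tau i)) (p (i+1))"
  shows "Xd (rr j \<circ> p) i = Xd p i"
  using rr_order[OF assms(3) pos_ok[OF assms(1,2)] assms(4)] by (simp add: Xd_def)

lemma inv_rr: "j \<ge> 0 \<Longrightarrow> inv (rr j) = rr j"
  by (rule inv_unique_comp) (auto simp: fun_eq_iff rr_invol)

lemma bij_rr: "j \<ge> 0 \<Longrightarrow> bij (rr j)"
  by (metis bij_betw_imageI inj_def rr_invol surj_def)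

lemma sp_bij: "p \<in> signed_perms n \<Longrightarrow> bij p"
  using permutes_bij[OF sp_perm] .

lemma inv_left_comp: "p \<in> signed_perms n \<Longrightarrow> j \<ge> 0 \<Longrightarrow> inv (rr j \<circ> p) = inv p \<circ> rr j"
  by (simp add: o_inv_distrib[OF bij_rr sp_bij] inv_rr)

lemma inv_right_comp: "p \<in> signed_perms n \<Longrightarrow> j \<ge> 0 \<Longrightarrow> inv (p \<circ> rr j) = rr j \<circ> inv p"
  by (simp add: o_inv_distrib[OF sp_bij bij_rr] inv_rr)

lemma pair_inv:
  assumes "p \<in> signed_perms n"
  shows "{inv p a, inv p b} = {c, d} \<longleftrightarrow> {a, b} = {p c, p d}"
  using inv_left[OF assms] inv_right[OF assms] by (auto simp: doubleton_eq_iff)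

lemma bad_inv:
  assumes "p \<in> signed_perms n"
  shows "bad i (inv p (tau j)) (inv p (j+1)) \<longleftrightarrow> bad j (p (tau i)) (p (i+1))"
proof -
  have m: "{inv p (tau j), inv p (j+1)} = {- tau i, -(i+1)} \<longleftrightarrow> {tau j, j+1} = {- p (tau i), - p (i+1)}"
    using pair_inv[OF assms] sp_odd[OF assms] by metis
  have "{tau j, j+1} = {- p (tau i), - p (i+1)} \<longleftrightarrow> {- tau j, -(j+1)} = {p (tau i), p (i+1)}"
    by (auto simp: doubleton_eq_iff)
  thus ?thesis unfolding bad_def using pair_inv[OF assms] m by metis
qed

lemma bad_eq:
  assumes "p \<in> signed_perms n" "i \<ge> 0" "j \<ge> 0" "bad j (p (tau i)) (p (i+1))"
  shows "Xd p i = Xd (inv p) j"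
proof -
  have l: "inv p (p x) = x" for x using inv_left[OF assms(1)] .
  have o: "p (- x) = - p x" for x using sp_odd[OF assms(1)] .
  have ti: "tau i < i + 1" "tau j < j + 1" using assms by (auto simp: tau_def)
  from assms(4) consider
     "p (tau i) = tau j" "p (i+1) = j+1" | "p (tau i) = j+1" "p (i+1) = tau j"
   | "p (tau i) = - tau j" "p (i+1) = -(j+1)" | "p (tau i) = -(j+1)" "p (i+1) = - tau j"
    by (auto simp: bad_def doubleton_eq_iff)
  thus ?thesis
  proof cases
    case 1
    hence "inv p (tau j) = tau i" "inv p (j+1) = i+1" using l by metis+
    thus ?thesis using 1 ti by (simp add: Xd_def)
  next
    case 2
    hence "inv p (tau j) = i+1" "inv p (j+1) = tau i" using l by metis+
    thus ?thesis using 2 ti by (simp add: Xd_def)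
  next
    case 3
    hence "p (- tau i) = tau j" "p (-(i+1)) = j+1" using o by (metis minus_minus)+
    hence "inv p (tau j) = - tau i" "inv p (j+1) = -(i+1)" using l by metis+
    thus ?thesis using 3 ti by (simp add: Xd_def)
  next
    case 4
    hence "p (- tau i) = j+1" "p (-(i+1)) = tau j" using o by (metis minus_minus)+
    hence "inv p (tau j) = -(i+1)" "inv p (j+1) = - tau i" using l by metis+
    thus ?thesis using 4 ti by (simp add: Xd_def)
  qed
qed


lemma desD_sum:
  assumes "p \<in> signed_perms n"
  shows "real (desD n p) = (\<Sum>i\<in>{0..<int n}. Xd p i)"
proof -
  have "{i \<in> {0..<int n}. Dval p i > Dval p (i+1)} = {i \<in> {0..<int n}. p (tau i) > p (i+1)}"
    using sp_odd[OF assms, of 2] by (auto simp: Dval_def tau_def)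
  hence "real (desD n p) = (\<Sum>i\<in>{i \<in> {0..<int n}. p (tau i) > p (i+1)}. 1)"
    by (simp add: desD_def)
  also have "\<dots> = (\<Sum>i\<in>{0..<int n}. Xd p i)"
    by (subst sum.inter_filter) (auto simp: Xd_def)
  finally show ?thesis .
qed

lemma invol_bij: "(\<And>x. x \<in> A \<Longrightarrow> f x \<in> A) \<Longrightarrow> (\<And>x. x \<in> A \<Longrightarrow> f (f x) = x) \<Longrightarrow> bij_betw f A A"
  by (rule bij_betw_byWitness[where f'=f]) auto

lemma Xd01: "Xd p i * Xd p i = Xd p i"
  by (simp add: Xd_def)

lemma pair_sum:
  assumes n: "n \<ge> 2" and i: "i \<in> {0..<int n}" and j: "j \<in> {0..<int n}"
  shows "(\<Sum>p\<in>even_signed_perms n. Xd p i * Xd (inv p) j)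
     = real (card (even_signed_perms n)) / 4
       + real (card {p \<in> even_signed_perms n. bad j (p (tau i)) (p (i+1))}) / 4"
proof -
  define G where "G = even_signed_perms n"
  define Gb where "Gb = {p \<in> G. bad j (p (tau i)) (p (i+1))}"
  define Gg where "Gg = G - Gb"
  define X where "X p = Xd p i" for p
  define Y where "Y p = Xd (inv p) j" for p
  have i0: "i \<ge> 0" and j0: "j \<ge> 0" using i j by auto
  have fin: "finite G" using esp_finite G_def by simp
  have finb: "finite Gb" "finite Gg" using fin by (auto simp: Gb_def Gg_def)
  have Gsp: "p \<in> signed_perms n" if "p \<in> G" for p using that esp_sp G_def by blast
  have RG: "p \<circ> rr i \<in> G" if "p \<in> G" for p
    using esp_comp[OF _ rr_esp[OF n i]] that G_def by blast
  have LG: "rr j \<circ> p \<in> G" if "p \<in> G" for p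
    using esp_comp[OF rr_esp[OF n j]] that G_def by blast
  have RR: "(p \<circ> rr i) \<circ> rr i = p" for p using rr_invol[OF i0] by (auto simp: fun_eq_iff)
  have LL: "rr j \<circ> (rr j \<circ> p) = p" for p using rr_invol[OF j0] by (auto simp: fun_eq_iff)
  have Rbad: "bad j ((p \<circ> rr i) (tau i)) ((p \<circ> rr i) (i+1)) \<longleftrightarrow> bad j (p (tau i)) (p (i+1))" for p
    using bad_sym by (simp add: rr_tau[OF i0] rr_suc[OF i0])
  have Lbad: "bad j ((rr j \<circ> p) (tau i)) ((rr j \<circ> p) (i+1)) \<longleftrightarrow> bad j (p (tau i)) (p (i+1))" for p
    using bad_rr[OF j0] by simp
  have bRb: "bij_betw (\<lambda>p. p \<circ> rr i) Gb Gb"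
    by (rule invol_bij) (use RG RR Rbad in \<open>auto simp: Gb_def\<close>)
  have bRg: "bij_betw (\<lambda>p. p \<circ> rr i) Gg Gg"
    by (rule invol_bij) (use RG RR Rbad in \<open>auto simp: Gb_def Gg_def\<close>)
  have bLg: "bij_betw (\<lambda>p. rr j \<circ> p) Gg Gg"
    by (rule invol_bij) (use LG LL Lbad in \<open>auto simp: Gb_def Gg_def\<close>)
  have XR: "X (p \<circ> rr i) = 1 - X p" if "p \<in> G" for p
    using Xd_right[OF Gsp[OF that] i0] X_def by simp
  have YR: "Y (p \<circ> rr i) = Y p" if "p \<in> Gg" for p
  proof -
    have pG: "p \<in> G" and nb: "\<not> bad j (p (tau i)) (p (i+1))" using that by (auto simp: Gg_def Gb_def)
    have ip: "inv p \<in> signed_perms n" using sp_inv[OF Gsp[OF pG]] .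
    have "\<not> bad i (inv p (tau j)) (inv p (j+1))" using bad_inv[OF Gsp[OF pG]] nb by blast
    thus ?thesis using Xd_left[OF ip j0 i0] inv_right_comp[OF Gsp[OF pG] i0] Y_def by simp
  qed
  have YL: "Y (rr j \<circ> p) = 1 - Y p" if "p \<in> G" for p
    using Xd_right[OF sp_inv[OF Gsp[OF that]] j0] inv_left_comp[OF Gsp[OF that] j0] Y_def by simp
  have XYb: "X p * Y p = X p" if "p \<in> Gb" for p
  proof -
    have "X p = Y p" using bad_eq[OF Gsp i0 j0] that X_def Y_def by (auto simp: Gb_def)
    thus ?thesis using Xd01 X_def by metis
  qed
  have "(\<Sum>p\<in>Gg. Y p) = (\<Sum>p\<in>Gg. Y (rr j \<circ> p))"
    using sum.reindex_bij_betw[OF bLg, of Y] by simp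
  also have "\<dots> = (\<Sum>p\<in>Gg. 1 - Y p)" by (rule sum.cong) (auto simp: YL Gg_def)
  finally have sY: "(\<Sum>p\<in>Gg. Y p) = real (card Gg) / 2" by (simp add: sum_subtractf)
  have "(\<Sum>p\<in>Gg. X p * Y p) = (\<Sum>p\<in>Gg. X (p \<circ> rr i) * Y (p \<circ> rr i))"
    using sum.reindex_bij_betw[OF bRg, of "\<lambda>p. X p * Y p"] by simp
  also have "\<dots> = (\<Sum>p\<in>Gg. (1 - X p) * Y p)" by (rule sum.cong) (auto simp: XR YR Gg_def)
  also have "\<dots> = (\<Sum>p\<in>Gg. Y p) - (\<Sum>p\<in>Gg. X p * Y p)"
    by (simp add: algebra_simps sum_subtractf)
  finally have sg: "(\<Sum>p\<in>Gg. X p * Y p) = real (card Gg) / 4" using sY by simp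
  have "(\<Sum>p\<in>Gb. X p) = (\<Sum>p\<in>Gb. X (p \<circ> rr i))"
    using sum.reindex_bij_betw[OF bRb, of X] by simp
  also have "\<dots> = (\<Sum>p\<in>Gb. 1 - X p)" by (rule sum.cong) (auto simp: XR Gb_def)
  finally have sX: "(\<Sum>p\<in>Gb. X p) = real (card Gb) / 2" by (simp add: sum_subtractf)
  have "(\<Sum>p\<in>Gb. X p * Y p) = (\<Sum>p\<in>Gb. X p)" by (rule sum.cong) (simp_all add: XYb)
  hence sb: "(\<Sum>p\<in>Gb. X p * Y p) = real (card Gb) / 2" using sX by simp
  have GU: "G = Gg \<union> Gb" "Gg \<inter> Gb = {}" by (auto simp: Gg_def Gb_def)
  have "(\<Sum>p\<in>G. X p * Y p) = (\<Sum>p\<in>Gg. X p * Y p) + (\<Sum>p\<in>Gb. X p * Y p)"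
    using GU sum.union_disjoint[OF finb(2) finb(1)] by simp
  moreover have "card G = card Gg + card Gb" using GU card_Un_disjoint[OF finb(2) finb(1)] by simp
  ultimately show ?thesis using sg sb unfolding G_def[symmetric] Gb_def[symmetric] X_def Y_def by (simp add: field_simps)
qed


definition st :: "int \<Rightarrow> int \<Rightarrow> int \<Rightarrow> int" where
  "st a b z = (if z = a then b else if z = b then a else if z = -a then -b else if z = -b then -a else z)"
definition fl :: "int \<Rightarrow> int \<Rightarrow> int" where
  "fl k z = (if z = k then -k else if z = -k then k else z)"

lemma st_cases:
  assumes "a \<ge> 1" "b \<ge> 1"
  shows "st a b a = b" "st a b b = a" "st a b (-a) = -b" "st a b (-b) = -a"
    "z \<noteq> a \<Longrightarrow> z \<noteq> b \<Longrightarrow> z \<noteq> -a \<Longrightarrow> z \<noteq> -b \<Longrightarrow> st a b z = z"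
  using assms unfolding st_def by auto

lemma st_invol:
  assumes "a \<ge> 1" "b \<ge> 1"
  shows "st a b (st a b z) = z"
proof -
  consider "z = a" | "z = b" | "z = -a" | "z = -b" | "z \<noteq> a" "z \<noteq> b" "z \<noteq> -a" "z \<noteq> -b" by blast
  thus ?thesis by cases (simp_all add: st_cases[OF assms])
qed

lemma st_odd:
  assumes "a \<ge> 1" "b \<ge> 1"
  shows "st a b (-z) = - st a b z"
proof -
  consider "z = a" | "z = b" | "z = -a" | "z = -b" | "z \<noteq> a" "z \<noteq> b" "z \<noteq> -a" "z \<noteq> -b" by blast
  thus ?thesis
  proof cases
    case 5
    hence "-z \<noteq> a" "-z \<noteq> b" "-z \<noteq> -a" "-z \<noteq> -b" by auto
    thus ?thesis using 5 st_cases(5)[OF assms] by simp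
  qed (simp_all add: st_cases[OF assms])
qed

lemma st_esp:
  assumes "a \<in> {1..int n}" "b \<in> {1..int n}"
  shows "st a b \<in> even_signed_perms n"
proof -
  have ab: "a \<ge> 1" "b \<ge> 1" using assms by auto
  have out: "st a b z = z" if "z \<notin> VV n" for z
  proof -
    have "z \<noteq> a" "z \<noteq> b" "z \<noteq> -a" "z \<noteq> -b" using that assms by (auto simp: VV_def)
    thus ?thesis using st_cases(5)[OF ab] by simp
  qed
  have "st a b permutes VV n"
    by (rule invol_permutes[OF st_invol[OF ab] out])
  hence sp: "st a b \<in> signed_perms n" using st_odd[OF ab] by (simp add: signed_perms_def VV_def)
  have nn: "st a b i \<ge> 0" if "i \<ge> 1" for i
  proof -
    have "i \<noteq> -a" "i \<noteq> -b" using that ab by auto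
    thus ?thesis using st_cases[OF ab] ab that by (cases "i = a"; cases "i = b") auto
  qed
  have e: "{i \<in> {1..int n}. st a b i < 0} = {}"
  proof (rule equals0I)
    fix i assume "i \<in> {i \<in> {1..int n}. st a b i < 0}"
    thus False using nn[of i] by simp
  qed
  have "even (card {i \<in> {1..int n}. st a b i < 0})" unfolding e by simp
  thus ?thesis using sp unfolding even_signed_perms_def by blast
qed

lemma fl_sp:
  assumes "k \<in> {1..int n}"
  shows "fl k \<in> signed_perms n" "par n (fl k) = -1"
proof -
  have "fl k permutes VV n"
    by (rule invol_permutes) (use assms in \<open>auto simp: fl_def VV_def\<close>)
  thus sp: "fl k \<in> signed_perms n" using assms by (auto simp: signed_perms_def VV_def fl_def)
  have "{i \<in> {1..int n}. fl k i < 0} = {k}"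
    using assms by (auto simp: fl_def)
  thus "par n (fl k) = -1" using par_alt[OF sp] by simp
qed

definition cfl :: "bool \<Rightarrow> int \<Rightarrow> int \<Rightarrow> int" where
  "cfl c k = (if c then fl k else id)"

lemma cfl_sp:
  assumes "k \<in> {1..int n}"
  shows "cfl c k \<in> signed_perms n" "par n (cfl c k) = (if c then -1 else 1)"
  using fl_sp[OF assms] sp_id par_id by (auto simp: cfl_def)

lemma trans_exists:
  assumes n: "n \<ge> 3" and x: "x \<in> VV n" and y: "y \<in> VV n" and xy: "x \<noteq> y" "x \<noteq> -y"
  shows "\<exists>h\<in>even_signed_perms n. h 1 = x \<and> h 2 = y"
proof -
  define a where "a = \<bar>x\<bar>"
  define b where "b = \<bar>y\<bar>"
  define c where "c = (if b = 1 then a else b)"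
  have a: "a \<in> {1..int n}" and b: "b \<in> {1..int n}" using x y by (auto simp: a_def b_def VV_def)
  have ab: "a \<noteq> b" using xy by (auto simp: a_def b_def abs_if split: if_splits)
  have c: "c \<in> {1..int n}" "c \<noteq> 1" "st 1 a c = b" using a b ab by (auto simp: c_def st_def)
  define F where "F = cfl (x < 0) 1 \<circ> cfl (y < 0) 2 \<circ> cfl ((x < 0) \<noteq> (y < 0)) 3"
  define h where "h = st 1 a \<circ> st 2 c \<circ> F"
  have k: "(1::int) \<in> {1..int n}" "(2::int) \<in> {1..int n}" "(3::int) \<in> {1..int n}" using n by auto
  have Fsp: "F \<in> signed_perms n" unfolding F_def by (intro sp_comp cfl_sp k)
  have Fpar: "par n F = 1"
    unfolding F_def using cfl_sp[OF k(1)] cfl_sp[OF k(2)] cfl_sp[OF k(3)]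
    by (simp add: par_comp sp_comp)
  have "F \<in> even_signed_perms n" using Fsp Fpar by (simp add: esp_iff)
  hence hG: "h \<in> even_signed_perms n" unfolding h_def
    by (intro esp_comp st_esp k c(1) a)
  have F1: "F 1 = (if x < 0 then -1 else 1)" and F2: "F 2 = (if y < 0 then -2 else 2)"
    by (auto simp: F_def cfl_def fl_def)
  have a1: "a \<ge> 1" and b1: "b \<ge> 1" and c1: "c \<ge> 1" using a b c by auto
  have t21: "st 2 c 1 = 1" using c(2) c1 by (intro st_cases(5)) auto
  have "h 1 = st 1 a (st 2 c (F 1))" by (simp add: h_def)
  also have "\<dots> = x"
  proof (cases "x < 0")
    case True
    thus ?thesis using F1 t21 st_odd[of 2 c 1] st_odd[of 1 a 1] st_cases(1)[of 1 a] a1 c1 by (simp add: a_def)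
  next
    case False
    thus ?thesis using F1 t21 st_cases(1)[of 1 a] a1 c1 by (simp add: a_def)
  qed
  finally have "h 1 = x" .
  moreover have "h 2 = y"
  proof -
    have t22: "st 2 c 2 = c" using st_cases(1)[of 2 c] c1 by simp
    have "h 2 = st 1 a (st 2 c (F 2))" by (simp add: h_def)
    also have "\<dots> = y"
    proof (cases "y < 0")
      case True
      thus ?thesis using F2 t22 st_odd[of 2 c 2] st_odd[of 1 a c] c(3) a1 c1 by (simp add: b_def)
    next
      case False
      thus ?thesis using F2 t22 c(3) a1 c1 by (simp add: b_def)
    qed
    finally show ?thesis .
  qed
  ultimately show ?thesis using hG by blast
qed


definition VP :: "nat \<Rightarrow> (int \<times> int) set" where
  "VP n = {(x, y). x \<in> VV n \<and> y \<in> VV n \<and> x \<noteq> y \<and> x \<noteq> -y}"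

definition fib :: "nat \<Rightarrow> int \<Rightarrow> int \<Rightarrow> int \<times> int \<Rightarrow> (int \<Rightarrow> int) set" where
  "fib n u v t = {p \<in> even_signed_perms n. (p u, p v) = t}"

lemma card_VV: "card (VV n) = 2 * n"
proof -
  have "card ({-int n..int n} - {0}) = card {-int n..int n} - 1" by (subst card_Diff_singleton) auto
  thus ?thesis by (simp add: VV_def)
qed

lemma card_VP: "card (VP n) = 2 * n * (2 * n - 2)"
proof -
  have e: "VP n = Sigma (VV n) (\<lambda>x. VV n - {x, -x})" by (auto simp: VP_def)
  have "card (VV n - {x, -x}) = 2 * n - 2" if "x \<in> VV n" for x
  proof -
    have "{x, -x} \<subseteq> VV n" "card {x, -x} = 2" using that by (auto simp: VV_def)
    thus ?thesis using card_VV card_Diff_subset[of "{x,-x}" "VV n"] by (simp add: VV_def)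
  qed
  hence "card (VP n) = (\<Sum>x\<in>VV n. 2 * n - 2)" unfolding e by (subst card_SigmaI) (auto simp: VV_def)
  thus ?thesis using card_VV by simp
qed

lemma finite_VP: "finite (VP n)"
proof -
  have "VP n \<subseteq> VV n \<times> VV n" by (auto simp: VP_def)
  thus ?thesis by (rule finite_subset) (simp add: VV_def)
qed

lemma fiber_eq:
  assumes n: "n \<ge> 3" and t: "t \<in> VP n" and t': "t' \<in> VP n"
  shows "card (fib n u v t) = card (fib n u v t')"
proof -
  obtain x y where xy: "t = (x, y)" by (cases t)
  obtain x' y' where xy': "t' = (x', y')" by (cases t')
  obtain h where h: "h \<in> even_signed_perms n" "h 1 = x" "h 2 = y"
    using trans_exists[OF n] t xy by (auto simp: VP_def)
  obtain h' where h': "h' \<in> even_signed_perms n" "h' 1 = x'" "h' 2 = y'"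
    using trans_exists[OF n] t' xy' by (auto simp: VP_def)
  define g where "g = h' \<circ> inv h"
  have gG: "g \<in> even_signed_perms n" unfolding g_def by (intro esp_comp esp_inv h' h)
  have hsp: "h \<in> signed_perms n" using esp_sp h by blast
  have gx: "g x = x'" "g y = y'" using inv_left[OF hsp] h h' by (metis comp_apply g_def)+
  have gsp: "g \<in> signed_perms n" using esp_sp gG by blast
  have "bij_betw (\<lambda>p. g \<circ> p) (fib n u v t) (fib n u v t')"
  proof (rule bij_betw_byWitness[where f'="\<lambda>p. inv g \<circ> p"])
    show "\<forall>p\<in>fib n u v t. inv g \<circ> (g \<circ> p) = p" using inv_left[OF gsp] by (auto simp: fun_eq_iff)
    show "\<forall>p\<in>fib n u v t'. g \<circ> (inv g \<circ> p) = p" using inv_right[OF gsp] by (auto simp: fun_eq_iff)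
    show "(\<lambda>p. g \<circ> p) ` fib n u v t \<subseteq> fib n u v t'"
      using gG gx xy xy' by (auto simp: fib_def intro: esp_comp)
    show "(\<lambda>p. inv g \<circ> p) ` fib n u v t' \<subseteq> fib n u v t"
    proof
      fix q assume "q \<in> (\<lambda>p. inv g \<circ> p) ` fib n u v t'"
      then obtain p where p: "p \<in> fib n u v t'" "q = inv g \<circ> p" by blast
      have "inv g x' = x" "inv g y' = y" using inv_left[OF gsp] gx by metis+
      thus "q \<in> fib n u v t" using p esp_comp[OF esp_inv[OF gG]] xy xy' by (auto simp: fib_def)
    qed
  qed
  thus ?thesis by (rule bij_betw_same_card)
qed

lemma fiber_sum:
  assumes u: "u \<in> VV n" and v: "v \<in> VV n" and uv: "u \<noteq> v" "u \<noteq> -v"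
  shows "(\<Sum>t\<in>VP n. real (card (fib n u v t))) = real (card (even_signed_perms n))"
proof -
  define G where "G = even_signed_perms n"
  have img: "(\<lambda>p. (p u, p v)) ` G \<subseteq> VP n"
  proof
    fix t assume "t \<in> (\<lambda>p. (p u, p v)) ` G"
    then obtain p where p: "p \<in> G" "t = (p u, p v)" by blast
    have sp: "p \<in> signed_perms n" using p esp_sp G_def by blast
    have "p u \<noteq> p v" "p u \<noteq> - p v" using sp_inj[OF sp] sp_odd[OF sp] uv by metis+
    thus "t \<in> VP n" using p sp_VV[OF sp] u v by (auto simp: VP_def)
  qed
  have "(\<Sum>t\<in>VP n. \<Sum>p\<in>{p \<in> G. (p u, p v) = t}. (1::real)) = (\<Sum>p\<in>G. 1)"
    by (rule sum.group[OF esp_finite[of n, folded G_def] finite_VP img])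
  thus ?thesis by (simp add: fib_def G_def)
qed

lemma fiber_val:
  assumes n: "n \<ge> 3" and u: "u \<in> VV n" and v: "v \<in> VV n" and uv: "u \<noteq> v" "u \<noteq> -v" and t: "t \<in> VP n"
  shows "real (card (fib n u v t)) = real (card (even_signed_perms n)) / (4 * real n * (real n - 1))"
proof -
  have "(\<Sum>t'\<in>VP n. real (card (fib n u v t'))) = (\<Sum>t'\<in>VP n. real (card (fib n u v t)))"
    by (rule sum.cong) (use fiber_eq[OF n _ t] in auto)
  hence "real (card (even_signed_perms n)) = real (card (VP n)) * real (card (fib n u v t))"
    using fiber_sum[OF u v uv] by simp
  moreover have "real (card (VP n)) = 4 * real n * (real n - 1)"
    using card_VP[of n] n by (simp add: of_nat_diff algebra_simps)
  moreover have "real n - 1 > 0" using n by simp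
  ultimately show ?thesis using n by (simp add: field_simps)
qed


lemma tau_props:
  assumes n: "n \<ge> 2" and j: "j \<in> {0..<int n}"
  shows "tau j \<in> VV n" "j + 1 \<in> VV n" "tau j \<noteq> j + 1" "tau j \<noteq> -(j+1)"
  using assms by (auto simp: tau_def VV_def)

lemma Gb_card:
  assumes n: "n \<ge> 3" and i: "i \<in> {0..<int n}" and j: "j \<in> {0..<int n}"
  shows "real (card {p \<in> even_signed_perms n. bad j (p (tau i)) (p (i+1))})
       = real (card (even_signed_perms n)) / (real n * (real n - 1))"
proof -
  define G where "G = even_signed_perms n"
  define u where "u = tau i"
  define v where "v = i + 1"
  define Bs where "Bs = {(tau j, j+1), (j+1, tau j), (-tau j, -(j+1)), (-(j+1), -tau j)}"
  define Gb where "Gb = {p \<in> G. bad j (p u) (p v)}"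
  have n2: "n \<ge> 2" using n by simp
  have badB: "bad j x y \<longleftrightarrow> (x, y) \<in> Bs" for x y by (auto simp: bad_def Bs_def doubleton_eq_iff)
  have uv: "u \<in> VV n" "v \<in> VV n" "u \<noteq> v" "u \<noteq> -v" using tau_props[OF n2 i] by (auto simp: u_def v_def)
  have tj: "tau j \<in> VV n" "j + 1 \<in> VV n" "tau j \<noteq> j + 1" "tau j \<noteq> -(j+1)" using tau_props[OF n2 j] by auto
  have BsVP: "Bs \<subseteq> VP n" using tj by (auto simp: Bs_def VP_def VV_def)
  have cB: "card Bs = 4" using tj by (auto simp: Bs_def VV_def)
  have finB: "finite Gb" using esp_finite by (auto simp: Gb_def G_def)
  have img: "(\<lambda>p. (p u, p v)) ` Gb \<subseteq> Bs" by (auto simp: Gb_def badB)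
  have "(\<Sum>t\<in>Bs. \<Sum>p\<in>{p \<in> Gb. (p u, p v) = t}. (1::real)) = (\<Sum>p\<in>Gb. 1)"
    by (rule sum.group[OF finB _ img]) (simp add: Bs_def)
  moreover have "{p \<in> Gb. (p u, p v) = t} = fib n u v t" if "t \<in> Bs" for t
    using that by (auto simp: Gb_def fib_def G_def badB)
  ultimately have "real (card Gb) = (\<Sum>t\<in>Bs. real (card (fib n u v t)))" by simp
  also have "\<dots> = (\<Sum>t\<in>Bs. real (card G) / (4 * real n * (real n - 1)))"
    by (rule sum.cong) (use fiber_val[OF n uv] BsVP G_def in auto)
  also have "\<dots> = real (card G) / (real n * (real n - 1))" using cB by simp
  finally show ?thesis by (simp add: Gb_def G_def u_def v_def)
qed

lemma n2_vals:
  assumes p: "p \<in> even_signed_perms 2"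
  shows "(p 1 = 1 \<and> p 2 = 2) \<or> (p 1 = 2 \<and> p 2 = 1) \<or> (p 1 = -1 \<and> p 2 = -2) \<or> (p 1 = -2 \<and> p 2 = -1)"
proof -
  have sp: "p \<in> signed_perms 2" using esp_sp p by blast
  have "p 1 \<in> VV 2" "p 2 \<in> VV 2" using sp_VV[OF sp] by (auto simp: VV_def)
  hence v: "p 1 \<in> {-2,-1,1,2}" "p 2 \<in> {-2,-1,1,2}" by (auto simp: VV_def)
  have d1: "p 1 \<noteq> p 2" using sp_inj[OF sp, of 1 2] by simp
  have d2: "p 1 \<noteq> - p 2" using sp_inj[OF sp, of 1 "-2"] sp_odd[OF sp, of 2] by simp
  have r: "{1..(2::int)} = {1, 2}" by auto
  have "par 2 p = 1" using p by (simp add: esp_iff)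
  hence s: "sgn (p 1) * sgn (p 2) = 1" by (simp add: par_def r)
  from v d1 d2 s show ?thesis by (auto simp: sgn_if)
qed


lemma bad_total:
  assumes "n \<ge> 2"
  shows "(\<Sum>i\<in>{0..<int n}. \<Sum>j\<in>{0..<int n}.
      real (card {p \<in> even_signed_perms n. bad j (p (tau i)) (p (i+1))}))
    = real n * real (card (even_signed_perms n)) / (real n - 1)"
proof (cases "n = 2")
  case True
  define G where "G = even_signed_perms 2"
  have o: "p (-2) = - p 2" if "p \<in> G" for p using sp_odd[OF esp_sp] that G_def by blast
  have key: "bad 0 (p (tau 0)) (p 1) \<and> \<not> bad 1 (p (tau 0)) (p 1) \<and> \<not> bad 0 (p (tau 1)) (p 2) \<and> bad 1 (p (tau 1)) (p 2)"
    if pG: "p \<in> G" for p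
  proof -
    have t: "p (tau 0) = - p 2" "tau 1 = 1" using o[OF pG] by (simp_all add: tau_def)
    have b1: "bad 1 x y \<longleftrightarrow> (x = 1 \<and> y = 2) \<or> (x = 2 \<and> y = 1) \<or> (x = -1 \<and> y = -2) \<or> (x = -2 \<and> y = -1)" for x y
      using badj[of 1 x y] by simp
    from n2_vals[of p] pG G_def show ?thesis unfolding t bad0 b1 by auto
  qed
  have e00: "{p \<in> G. bad 0 (p (tau 0)) (p 1)} = G" using key by blast
  have e01: "{p \<in> G. bad 1 (p (tau 0)) (p 1)} = {}" using key by blast
  have e10: "{p \<in> G. bad 0 (p (tau 1)) (p 2)} = {}" using key by blast
  have e11: "{p \<in> G. bad 1 (p (tau 1)) (p 2)} = G" using key by blast
  have r: "{0..<int 2} = {0, 1}" by auto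
  show ?thesis unfolding True r G_def[symmetric] by (simp add: e00 e01 e10 e11)
next
  case False
  hence n: "n \<ge> 3" using assms by simp
  have "(\<Sum>i\<in>{0..<int n}. \<Sum>j\<in>{0..<int n}.
      real (card {p \<in> even_signed_perms n. bad j (p (tau i)) (p (i+1))}))
     = (\<Sum>i\<in>{0..<int n}. \<Sum>j\<in>{0..<int n}. real (card (even_signed_perms n)) / (real n * (real n - 1)))"
    by (intro sum.cong refl) (simp add: Gb_card[OF n])
  also have "\<dots> = real n * real n * (real (card (even_signed_perms n)) / (real n * (real n - 1)))" by simp
  also have "\<dots> = real n * real (card (even_signed_perms n)) / (real n - 1)" using n by (simp add: field_simps)
  finally show ?thesis .
qed


lemma var_alt:
  assumes "finite A" "A \<noteq> {}"
  shows "unif_var A f = unif_expect A (\<lambda>x. (f x)^2) - (unif_expect A f)^2"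
proof -
  have c: "real (card A) > 0" using assms by (simp add: card_gt_0_iff)
  define m where "m = unif_expect A f"
  have sm: "(\<Sum>x\<in>A. f x) = m * real (card A)" using c by (simp add: m_def unif_expect_def)
  have "(\<Sum>x\<in>A. (f x - m)^2) = (\<Sum>x\<in>A. (f x)^2 - (2 * m) * f x + m^2)"
    by (rule sum.cong) (auto simp: power2_diff)
  also have "\<dots> = (\<Sum>x\<in>A. (f x)^2) - (2 * m) * (\<Sum>x\<in>A. f x) + real (card A) * m^2"
    by (simp add: sum_subtractf sum.distrib sum_distrib_left)
  finally have "(\<Sum>x\<in>A. (f x - m)^2) = (\<Sum>x\<in>A. (f x)^2) - (2 * m) * (\<Sum>x\<in>A. f x) + real (card A) * m^2" .
  thus ?thesis using c sm unfolding unif_var_def unif_expect_def m_def[symmetric]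
    by (simp add: field_simps power2_eq_square)
qed

lemma inv_bij_G: "bij_betw inv (even_signed_perms n) (even_signed_perms n)"
  by (rule invol_bij) (auto simp: esp_inv inv_inv_eq[OF sp_bij[OF esp_sp]])

lemma sum_inv_G: "(\<Sum>p\<in>even_signed_perms n. f (inv p)) = (\<Sum>p\<in>even_signed_perms n. f p)"
  using sum.reindex_bij_betw[OF inv_bij_G] by simp

lemma single_sum:
  assumes n: "n \<ge> 2" and i: "i \<in> {0..<int n}"
  shows "(\<Sum>p\<in>even_signed_perms n. Xd p i) = real (card (even_signed_perms n)) / 2"
proof -
  define G where "G = even_signed_perms n"
  have i0: "i \<ge> 0" using i by simp
  have b: "bij_betw (\<lambda>p. p \<circ> rr i) G G"
    by (rule invol_bij) (use esp_comp[OF _ rr_esp[OF n i]] rr_invol[OF i0] in \<open>auto simp: G_def fun_eq_iff\<close>)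
  have "(\<Sum>p\<in>G. Xd p i) = (\<Sum>p\<in>G. Xd (p \<circ> rr i) i)" using sum.reindex_bij_betw[OF b, of "\<lambda>p. Xd p i"] by simp
  also have "\<dots> = (\<Sum>p\<in>G. 1 - Xd p i)" by (rule sum.cong) (auto simp: G_def Xd_right[OF esp_sp i0])
  finally show ?thesis unfolding G_def[symmetric] by (simp add: sum_subtractf)
qed

theorem proposition5p8:
  fixes n :: nat
  assumes "n \<ge> 2"
  shows "unif_expect (even_signed_perms n) (\<lambda>\<pi>. real (desD n \<pi> + idesD n \<pi>)) = real n
    \<and> unif_var (even_signed_perms n) (\<lambda>\<pi>. real (desD n \<pi> + idesD n \<pi>))
        = 2 * unif_var (even_signed_perms n) (\<lambda>\<pi>. real (desD n \<pi>)) + real n / (2 * real n - 2)"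
proof -
  define G where "G = even_signed_perms n"
  define N where "N = real (card G)"
  define d where "d p = real (desD n p)" for p
  define e where "e p = real (idesD n p)" for p
  have fin: "finite G" and ne: "G \<noteq> {}" using esp_finite esp_id G_def by auto
  have Npos: "N > 0" using fin ne by (simp add: N_def card_gt_0_iff)
  have dsum: "d p = (\<Sum>i\<in>{0..<int n}. Xd p i)" if "p \<in> G" for p
    using desD_sum[OF esp_sp] that by (simp add: d_def G_def)
  have esum: "e p = (\<Sum>j\<in>{0..<int n}. Xd (inv p) j)" if "p \<in> G" for p
    using desD_sum[OF sp_inv[OF esp_sp]] that by (simp add: e_def idesD_def G_def)
  have Sd: "(\<Sum>p\<in>G. d p) = real n * N / 2"
  proof -
    have "(\<Sum>p\<in>G. d p) = (\<Sum>p\<in>G. \<Sum>i\<in>{0..<int n}. Xd p i)" by (rule sum.cong) (auto simp: dsum)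
    also have "\<dots> = (\<Sum>i\<in>{0..<int n}. \<Sum>p\<in>G. Xd p i)" by (rule sum.swap)
    also have "\<dots> = (\<Sum>i\<in>{0..<int n}. N / 2)"
      by (rule sum.cong) (use single_sum[OF assms] in \<open>auto simp: N_def G_def\<close>)
    finally show ?thesis by simp
  qed
  have einv: "e p = d (inv p)" for p by (simp add: e_def d_def idesD_def)
  have Se: "(\<Sum>p\<in>G. e p) = (\<Sum>p\<in>G. d p)" unfolding einv G_def by (rule sum_inv_G)
  have Se2: "(\<Sum>p\<in>G. (e p)^2) = (\<Sum>p\<in>G. (d p)^2)" unfolding einv G_def by (rule sum_inv_G[where f="\<lambda>p. (d p)^2"])
  have Sde: "(\<Sum>p\<in>G. d p * e p) = real n ^ 2 * N / 4 + real n * N / (4 * (real n - 1))"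
  proof -
    have "(\<Sum>p\<in>G. d p * e p) = (\<Sum>p\<in>G. \<Sum>i\<in>{0..<int n}. \<Sum>j\<in>{0..<int n}. Xd p i * Xd (inv p) j)"
      by (rule sum.cong) (auto simp: dsum esum sum_product)
    also have "\<dots> = (\<Sum>i\<in>{0..<int n}. \<Sum>j\<in>{0..<int n}. \<Sum>p\<in>G. Xd p i * Xd (inv p) j)"
      by (simp add: sum.swap[of _ G] sum.swap[of _ G "{0..<int n}"])
    also have "\<dots> = (\<Sum>i\<in>{0..<int n}. \<Sum>j\<in>{0..<int n}. N / 4
          + real (card {p \<in> G. bad j (p (tau i)) (p (i+1))}) / 4)"
      by (intro sum.cong refl) (simp add: pair_sum[OF assms] N_def G_def)
    also have "\<dots> = real n ^ 2 * N / 4 + (\<Sum>i\<in>{0..<int n}. \<Sum>j\<in>{0..<int n}.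
          real (card {p \<in> G. bad j (p (tau i)) (p (i+1))})) / 4"
      by (simp add: sum.distrib sum_divide_distrib power2_eq_square)
    also have "\<dots> = real n ^ 2 * N / 4 + real n * N / (4 * (real n - 1))"
      using bad_total[OF assms] by (simp add: N_def G_def)
    finally show ?thesis .
  qed
  have E1: "unif_expect G (\<lambda>p. d p + e p) = real n"
    using Sd Se Npos by (simp add: unif_expect_def sum.distrib N_def[symmetric] field_simps)
  have Ed: "unif_expect G d = real n / 2" using Sd Npos by (simp add: unif_expect_def N_def[symmetric])
  have Esq: "unif_expect G (\<lambda>p. (d p + e p)^2) = 2 * unif_expect G (\<lambda>p. (d p)^2) + 2 * ((\<Sum>p\<in>G. d p * e p) / N)"
    unfolding unif_expect_def N_def[symmetric] using Se2
    by (simp add: power2_sum sum.distrib sum_distrib_left add_divide_distrib mult.assoc)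
  have n1: "real n - 1 > 0" using assms by simp
  have "unif_var G (\<lambda>p. d p + e p) = 2 * unif_var G d + real n / (2 * real n - 2)"
    unfolding var_alt[OF fin ne] E1 Ed Esq Sde using Npos n1
    by (simp add: field_simps power2_eq_square)
  moreover have "(\<lambda>p. real (desD n p + idesD n p)) = (\<lambda>p. d p + e p)" by (simp add: d_def e_def fun_eq_iff)
  ultimately show ?thesis using E1 unfolding G_def d_def by simp
qed

end
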